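(* For disjunctive guarded systems of type $(A,B)$ and every LTL formula without the next operator $h(A,B_1)$: for all $n>2|B|$, if $(A,B)^{(1,n)}\models\mathsf E_{uncond}\,h(A,B_1)$ then $(A,B)^{(1,2|B|)}\models\mathsf E_{uncond}\,h(A,B_1)$.
   Context: A process template is $U=(Q_U,\mathit{init}_U,\Sigma_U,\delta_U)$ with finite states $Q_U$, initial state $\mathit{init}_U$, finite input alphabet $\Sigma_U$ and guarded transitions $\delta_U\subseteq Q_U\times\Sigma_U\times 2^{Q_A\cup Q_B}\times Q_U$; templates $A,B$ have disjoint state sets and disjoint alphabets, and $|B|=|Q_B|$. The system $(A,B)^{(1,n)}$ consists of one copy of $A$ and $n$ copies $B_1,\dots,B_n$ of $B$; a global state $s$ gives each process a local state, a global input $e$ gives each process an input letter, and initially all processes are in their initial states. In a disjunctive system a guard $g$ is satisfied for process $p$ in $s$ iff some process $p'\ne p$ has $s(p')\in g$. A local transition $(q,\sigma,g,q')$ of $p$ is enabled for $(s,e)$ if $s(p)=q$, $e(p)=\sigma$ and $g$ is satisfied for $p$ in $s$; a global step changes the state of exactly one process along an enabled transition. A path is a sequence of configurations $(s_1,e_1,p_1),(s_2,e_2,p_2),\dots$ where $p_t$ makes the step from $s_t$ to $s_{t+1}$ under $e_t$, a configuration $(s,e,\bot)$ occurs (as the last one) exactly when all processes are disabled, and $e_{t+1}(p)=e_t(p)$ for every process $p$ not moving at moment $t$. A run is a maximal path from the initial state. A run is unconditionally fair if it is infinite and every process moves infinitely often. For an LTL formula $h(A,B_1)$ without next operator over atomic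 propositions from $Q_A\cup\Sigma_A$ and $(Q_B\cup\Sigma_B)\times\{1\}$ (interpreted on the local states and inputs of $A$ and $B_1$), $(A,B)^{(1,n)}\models\mathsf E_{uncond}\,h(A,B_1)$ means some unconditionally fair run satisfies $h$. *)

theory Defs
  imports Main
begin

text \<open>Both templates of a system share the HOL types 'q (local states) and 'a (input letters);
  disjointness of the state sets and of the alphabets is assumed explicitly.\<close>

record ('q, 'a) template =
  states :: "'q set"
  init   :: "'q"
  alph   :: "'a set"
  trans  :: "('q \<times> 'a \<times> 'q set \<times> 'q) set"

definition wf_template :: "('q,'a) template \<Rightarrow> 'q set \<Rightarrow> bool" where
  "wf_template U G \<longleftrightarrow> finite (states U) \<and> init U \<in> states U \<and> finite (alph U) \<and>
     trans U \<subseteq> {(q, \<sigma>, g, q'). q \<in> states U \<and> \<sigma> \<in> alph U \<and> g \<subseteq> G \<and> q' \<in> states U}"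

definition wf_pair :: "('q,'a) template \<Rightarrow> ('q,'a) template \<Rightarrow> bool" where
  "wf_pair A B \<longleftrightarrow>
     wf_template A (states A \<union> states B) \<and> wf_template B (states A \<union> states B) \<and>
     states A \<inter> states B = {} \<and> alph A \<inter> alph B = {}"

text \<open>Processes are numbered 0..n: process 0 is the copy of A, process i (1 \<le> i \<le> n) is B_i.
  A global state is a function s :: nat \<Rightarrow> 'q, a global input a function e :: nat \<Rightarrow> 'a;
  only the values on {0..n} are relevant.\<close>

definition tmpl :: "('q,'a) template \<Rightarrow> ('q,'a) template \<Rightarrow> nat \<Rightarrow> ('q,'a) template" where
  "tmpl A B p = (if p = 0 then A else B)"

definition guard_sat :: "nat \<Rightarrow> (nat \<Rightarrow> 'q) \<Rightarrow> nat \<Rightarrow> 'q set \<Rightarrow> bool" where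
  "guard_sat n s p g \<longleftrightarrow> (\<exists>p' \<in> {0..n}. p' \<noteq> p \<and> s p' \<in> g)"

definition enabled ::
  "('q,'a) template \<Rightarrow> ('q,'a) template \<Rightarrow> nat \<Rightarrow> (nat \<Rightarrow> 'q) \<Rightarrow> (nat \<Rightarrow> 'a) \<Rightarrow> nat
     \<Rightarrow> ('q \<times> 'a \<times> 'q set \<times> 'q) \<Rightarrow> bool" where
  "enabled A B n s e p tr \<longleftrightarrow> p \<in> {0..n} \<and> tr \<in> trans (tmpl A B p) \<and>
     (case tr of (q, \<sigma>, g, q') \<Rightarrow> s p = q \<and> e p = \<sigma> \<and> guard_sat n s p g)"

text \<open>Infinite run: an infinite sequence of configurations (s t, e t, pr t) starting in the initial
  state, where process pr t makes a step from s t to s (Suc t) under e t along an enabled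
  transition, no other process changes state, and the inputs of non-moving processes are kept.
  (An infinite path is automatically maximal and never contains the configuration with \<bottom>.)\<close>
definition inf_run ::
  "('q,'a) template \<Rightarrow> ('q,'a) template \<Rightarrow> nat \<Rightarrow>
     (nat \<Rightarrow> nat \<Rightarrow> 'q) \<Rightarrow> (nat \<Rightarrow> nat \<Rightarrow> 'a) \<Rightarrow> (nat \<Rightarrow> nat) \<Rightarrow> bool" where
  "inf_run A B n s e pr \<longleftrightarrow>
     (\<forall>p \<in> {0..n}. s 0 p = init (tmpl A B p)) \<and>
     (\<forall>t. \<forall>p \<in> {0..n}. e t p \<in> alph (tmpl A B p)) \<and>
     (\<forall>t. pr t \<in> {0..n} \<and>
          (\<exists>g. enabled A B n (s t) (e t) (pr t) (s t (pr t), e t (pr t), g, s (Suc t) (pr t))) \<and>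
          (\<forall>p. p \<noteq> pr t \<longrightarrow> s (Suc t) p = s t p \<and> e (Suc t) p = e t p))"

definition uncond_fair :: "nat \<Rightarrow> (nat \<Rightarrow> nat) \<Rightarrow> bool" where
  "uncond_fair n pr \<longleftrightarrow> (\<forall>p \<in> {0..n}. infinite {t. pr t = p})"

datatype ('q, 'a) ap = StA 'q | InA 'a | StB1 'q | InB1 'a

datatype 'p ltlx =
    Prop 'p
  | TrueF
  | NotF "'p ltlx"
  | AndF "'p ltlx" "'p ltlx"
  | UntilF "'p ltlx" "'p ltlx"

fun ltlx_sem :: "(nat \<Rightarrow> 'p set) \<Rightarrow> 'p ltlx \<Rightarrow> bool" where
  "ltlx_sem w (Prop a) = (a \<in> w 0)"
| "ltlx_sem w TrueF = True"
| "ltlx_sem w (NotF \<phi>) = (\<not> ltlx_sem w \<phi>)"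
| "ltlx_sem w (AndF \<phi> \<psi>) = (ltlx_sem w \<phi> \<and> ltlx_sem w \<psi>)"
| "ltlx_sem w (UntilF \<phi> \<psi>) =
     (\<exists>k. ltlx_sem (\<lambda>i. w (i + k)) \<psi> \<and> (\<forall>j<k. ltlx_sem (\<lambda>i. w (i + j)) \<phi>))"

definition label :: "(nat \<Rightarrow> 'q) \<Rightarrow> (nat \<Rightarrow> 'a) \<Rightarrow> ('q,'a) ap set" where
  "label s e = {StA (s 0), InA (e 0), StB1 (s 1), InB1 (e 1)}"

definition E_uncond ::
  "('q,'a) template \<Rightarrow> ('q,'a) template \<Rightarrow> nat \<Rightarrow> ('q,'a) ap ltlx \<Rightarrow> bool" where
  "E_uncond A B n h \<longleftrightarrow>
     (\<exists>s e pr. inf_run A B n s e pr \<and> uncond_fair n pr \<and>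
               ltlx_sem (\<lambda>t. label (s t) (e t)) h)"

end

theory Submission
  imports Defs "HOL-Library.Infinite_Set"
begin

definition stut :: "(nat \<Rightarrow> 'p set) \<Rightarrow> (nat \<Rightarrow> 'p set) \<Rightarrow> bool" where
  "stut w w' \<longleftrightarrow> (\<exists>\<psi>. mono \<psi> \<and> \<psi> 0 = 0 \<and> (\<forall>i. w' i = w (\<psi> i)) \<and>
      (\<forall>i u. \<psi> i \<le> u \<and> u < \<psi> (Suc i) \<longrightarrow> w u = w (\<psi> i)) \<and> (\<forall>u. \<exists>i. u < \<psi> i))"

lemma stut_suffix:
  assumes m: "mono \<psi>" and z: "\<psi> 0 = 0" and ww: "\<forall>i. w' i = w (\<psi> i)"
    and blk: "\<forall>i u. \<psi> i \<le> u \<and> u < \<psi> (Suc i) \<longrightarrow> w u = w (\<psi> i)"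
    and ub: "\<forall>u. \<exists>i. u < \<psi> i"
    and u1: "\<psi> j \<le> u" and u2: "u < \<psi> (Suc j) \<or> u = \<psi> j"
  shows "stut (\<lambda>i. w (i + u)) (\<lambda>i. w' (i + j))"
proof -
  define \<phi> where "\<phi> x = (if x = 0 then 0 else \<psi> (x + j) - u)" for x
  have mj: "\<psi> (Suc j) \<ge> u" using u2 u1 m by (auto dest: monoD[of _ j "Suc j"])
  have ge: "x \<ge> 1 \<Longrightarrow> \<psi> (x + j) \<ge> u" for x
    using mj m by (metis add.commute add_le_mono1 le_trans monoD plus_1_eq_Suc)
  have wu: "w u = w (\<psi> j)" using blk u1 u2 by auto
  have "mono \<phi>"
  proof (rule monoI)
    fix x y :: nat assume "x \<le> y"
    then show "\<phi> x \<le> \<phi> y" unfolding \<phi>_def using m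
      by (auto simp: monoD diff_le_mono)
  qed
  moreover have "\<phi> 0 = 0" by (simp add: \<phi>_def)
  moreover have "\<forall>i. w' (i + j) = w (\<phi> i + u)"
  proof
    fix i show "w' (i + j) = w (\<phi> i + u)"
      using ww wu ge[of i] by (cases "i = 0") (auto simp: \<phi>_def)
  qed
  moreover have "\<forall>i v. \<phi> i \<le> v \<and> v < \<phi> (Suc i) \<longrightarrow> w (v + u) = w (\<phi> i + u)"
  proof (intro allI impI)
    fix i v assume a: "\<phi> i \<le> v \<and> v < \<phi> (Suc i)"
    show "w (v + u) = w (\<phi> i + u)"
    proof (cases "i = 0")
      case True
      then have "v + u < \<psi> (Suc j)" using a mj by (auto simp: \<phi>_def)
      then have "w (v + u) = w (\<psi> j)" using blk u1 by auto
      then show ?thesis using True wu by (simp add: \<phi>_def)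
    next
      case False
      then have "\<psi> (i + j) \<le> v + u" "v + u < \<psi> (Suc (i + j))"
        using a ge[of i] ge[of "Suc i"] by (auto simp: \<phi>_def)
      then have "w (v + u) = w (\<psi> (i + j))" using blk by auto
      then show ?thesis using False ge[of i] by (simp add: \<phi>_def)
    qed
  qed
  moreover have "\<forall>v. \<exists>i. v < \<phi> i"
  proof
    fix v
    obtain i where "v + u < \<psi> i" using ub by blast
    moreover have "\<psi> i \<le> \<psi> (i + 1 + j)" by (rule monoD[OF m]) simp
    ultimately have "v < \<phi> (i + 1)" unfolding \<phi>_def by simp
    then show "\<exists>i. v < \<phi> i" by blast
  qed
  ultimately show ?thesis unfolding stut_def by (intro exI[of _ \<phi>]) auto
qed

lemma stut_sem: "stut w w' \<Longrightarrow> ltlx_sem w' \<phi> = ltlx_sem w \<phi>"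
proof (induction \<phi> arbitrary: w w')
  case (Prop a)
  then show ?case unfolding stut_def by auto
next
  case TrueF then show ?case by simp
next
  case (NotF \<phi>) then show ?case by simp
next
  case (AndF \<phi>1 \<phi>2) then show ?case by simp
next
  case (UntilF \<phi>1 \<phi>2)
  from UntilF.prems obtain \<psi> where m: "mono \<psi>" and z: "\<psi> 0 = 0" and ww: "\<forall>i. w' i = w (\<psi> i)"
    and blk: "\<forall>i u. \<psi> i \<le> u \<and> u < \<psi> (Suc i) \<longrightarrow> w u = w (\<psi> i)"
    and ub: "\<forall>u. \<exists>i. u < \<psi> i" unfolding stut_def by blast
  note suf = stut_suffix[OF m z ww blk ub]
  have iv: "\<exists>j. \<psi> j \<le> u \<and> u < \<psi> (Suc j)" for u
  proof -
    obtain i where i: "u < \<psi> i" using ub by blast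
    define j where "j = (LEAST j. u < \<psi> (Suc j))"
    have i0: "i \<noteq> 0" using i z by (auto intro: ccontr)
    have ex: "u < \<psi> (Suc (i - 1))" using i i0 by simp
    have j1: "u < \<psi> (Suc j)" unfolding j_def by (rule LeastI[of "\<lambda>j. u < \<psi> (Suc j)", OF ex])
    have j2: "\<psi> j \<le> u"
    proof (cases j)
      case 0 then show ?thesis using z by simp
    next
      case (Suc j')
      then have "\<not> u < \<psi> (Suc j')" unfolding j_def using not_less_Least
        by (metis j_def lessI)
      then show ?thesis using Suc by simp
    qed
    show ?thesis using j1 j2 by blast
  qed
  show ?case
  proof
    assume "ltlx_sem w' (UntilF \<phi>1 \<phi>2)"
    then obtain k where k1: "ltlx_sem (\<lambda>i. w' (i + k)) \<phi>2"
      and k2: "\<forall>j<k. ltlx_sem (\<lambda>i. w' (i + j)) \<phi>1" by auto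
    have "ltlx_sem (\<lambda>i. w (i + \<psi> k)) \<phi>2"
      using UntilF.IH(2)[OF suf[of k "\<psi> k"]] k1 by simp
    moreover have "\<forall>v<\<psi> k. ltlx_sem (\<lambda>i. w (i + v)) \<phi>1"
    proof (intro allI impI)
      fix v assume v: "v < \<psi> k"
      obtain j where j: "\<psi> j \<le> v" "v < \<psi> (Suc j)" using iv by blast
      have "j < k" using j v m by (metis leI le_less_trans monoD not_less_eq_eq order.strict_iff_not)
      then show "ltlx_sem (\<lambda>i. w (i + v)) \<phi>1"
        using UntilF.IH(1)[OF suf[of j v]] j k2 by simp
    qed
    ultimately show "ltlx_sem w (UntilF \<phi>1 \<phi>2)" by auto
  next
    assume "ltlx_sem w (UntilF \<phi>1 \<phi>2)"
    then obtain k' where k1: "ltlx_sem (\<lambda>i. w (i + k')) \<phi>2"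
      and k2: "\<forall>j<k'. ltlx_sem (\<lambda>i. w (i + j)) \<phi>1" by auto
    define k where "k = (LEAST j. k' \<le> \<psi> j \<or> k' < \<psi> (Suc j))"
    obtain j0 where "\<psi> j0 \<le> k'" "k' < \<psi> (Suc j0)" using iv by blast
    then have ex: "k' \<le> \<psi> j0 \<or> k' < \<psi> (Suc j0)" by simp
    have kk: "k' \<le> \<psi> k \<or> k' < \<psi> (Suc k)" unfolding k_def by (rule LeastI[of "\<lambda>j. k' \<le> \<psi> j \<or> k' < \<psi> (Suc j)", OF ex])
    have before: "\<psi> j < k' \<and> \<psi> (Suc j) \<le> k'" if "j < k" for j
      using not_less_Least[OF that[unfolded k_def]] by (simp add: k_def not_le)
    have pk: "\<psi> k \<le> k'"
    proof (cases k)
      case 0 then show ?thesis using z by simp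
    next
      case (Suc j) then show ?thesis using before[of j] by simp
    qed
    have "k' < \<psi> (Suc k) \<or> k' = \<psi> k" using kk pk by auto
    then have "ltlx_sem (\<lambda>i. w' (i + k)) \<phi>2"
      using UntilF.IH(2)[OF suf[of k k', OF pk]] k1 by simp
    moreover have "\<forall>j<k. ltlx_sem (\<lambda>i. w' (i + j)) \<phi>1"
    proof (intro allI impI)
      fix j assume j: "j < k"
      have "ltlx_sem (\<lambda>i. w (i + \<psi> j)) \<phi>1" using k2 before[OF j] by auto
      then show "ltlx_sem (\<lambda>i. w' (i + j)) \<phi>1"
        using UntilF.IH(1)[OF suf[of j "\<psi> j"]] by simp
    qed
    ultimately show "ltlx_sem w' (UntilF \<phi>1 \<phi>2)" by auto
  qed
qed

locale sim =
  fixes A B :: "('q,'a) template" and N :: nat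
    and X :: "nat \<Rightarrow> nat \<Rightarrow> 'q" and Y :: "nat \<Rightarrow> nat \<Rightarrow> 'a" and mvs :: "nat \<Rightarrow> nat \<Rightarrow> bool"
  assumes frame: "\<not> mvs t j \<Longrightarrow> X j (Suc t) = X j t \<and> Y j (Suc t) = Y j t"
    and mvN: "mvs t j \<Longrightarrow> j \<le> N"
    and fairs: "j \<le> N \<Longrightarrow> \<exists>t\<ge>t0. mvs t j"
    and stepv: "mvs t j \<Longrightarrow> \<exists>g. (X j t, Y j t, g, X j (Suc t)) \<in> trans (tmpl A B j) \<and>
                  guard_sat N (\<lambda>i. if mvs t i \<and> i < j then X i (Suc t) else X i t) j g"
    and init: "j \<le> N \<Longrightarrow> X j 0 = init (tmpl A B j)"
    and alph: "j \<le> N \<Longrightarrow> Y j t \<in> alph (tmpl A B j)"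
    and excl: "mvs t 0 \<Longrightarrow> \<not> mvs t 1"
    and N1: "1 \<le> N"
begin

definition K where "K = Suc N"
definition cfg :: "nat \<Rightarrow> nat \<Rightarrow> 'q" where
  "cfg m j = (if mvs (m div K) j \<and> j < m mod K then X j (Suc (m div K)) else X j (m div K))"
definition inp :: "nat \<Rightarrow> nat \<Rightarrow> 'a" where
  "inp m j = (if mvs (m div K) j \<and> j < m mod K then Y j (Suc (m div K)) else Y j (m div K))"
definition Ev :: "nat set" where "Ev = {m. mvs (m div K) (m mod K)}"
definition en where "en = enumerate Ev"

lemma K_pos: "0 < K" by (simp add: K_def)

lemma code_div: "j < K \<Longrightarrow> (t * K + j) div K = t" by (simp add: K_pos)
lemma code_mod: "j < K \<Longrightarrow> (t * K + j) mod K = j" by simp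

lemma Ev_code: "mvs t j \<Longrightarrow> t * K + j \<in> Ev"
proof -
  assume a: "mvs t j"
  then have "j < K" using mvN[OF a] by (simp add: K_def)
  then show ?thesis using a by (simp add: Ev_def code_div code_mod)
qed

lemma Ev_inf: "infinite Ev"
proof -
  have "\<forall>m. \<exists>m'\<ge>m. m' \<in> Ev"
  proof
    fix m
    obtain t where t: "t \<ge> m" "mvs t 0" using fairs[of 0 m] by auto
    have "t \<le> t * K" by (simp add: K_def)
    then have "t * K + 0 \<ge> m" using t(1) by linarith
    then show "\<exists>m'\<ge>m. m' \<in> Ev" using Ev_code[OF t(2)] by blast
  qed
  then show ?thesis using infinite_nat_iff_unbounded_le by blast
qed

lemma en_in: "en i \<in> Ev" unfolding en_def using enumerate_in_set[OF Ev_inf] .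
lemma en_less_iff[simp]: "en i < en j \<longleftrightarrow> i < j" unfolding en_def using Ev_inf by simp
lemma en_le_iff[simp]: "en i \<le> en j \<longleftrightarrow> i \<le> j" unfolding en_def using Ev_inf by simp
lemma en_ex: "m \<in> Ev \<Longrightarrow> \<exists>i. en i = m" unfolding en_def using enumerate_Ex[OF Ev_inf] by blast
lemma le_en: "i \<le> en i" unfolding en_def using le_enumerate[OF Ev_inf] .

lemma en_gap: "en i < m \<Longrightarrow> m < en (Suc i) \<Longrightarrow> m \<notin> Ev"
proof
  assume a: "en i < m" "m < en (Suc i)" "m \<in> Ev"
  then obtain j where "en j = m" using en_ex by blast
  then show False using a by auto
qed

lemma en_gap0: "m < en 0 \<Longrightarrow> m \<notin> Ev"
proof
  assume a: "m < en 0" "m \<in> Ev"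
  then obtain j where "en j = m" using en_ex by blast
  then show False using a by auto
qed

lemma mod_div_Suc_cases:
  "(Suc (m mod K) < K \<and> Suc m div K = m div K \<and> Suc m mod K = Suc (m mod K)) \<or>
   (Suc (m mod K) = K \<and> Suc m div K = Suc (m div K) \<and> Suc m mod K = 0)"
proof -
  have "m mod K < K" using K_pos by simp
  then show ?thesis by (auto simp: mod_Suc div_Suc)
qed

lemma Suc_code:
  obtains "Suc m div K = m div K" "Suc m mod K = Suc (m mod K)"
  | "Suc m div K = Suc (m div K)" "Suc m mod K = 0" "m mod K = N"
  using mod_div_Suc_cases[of m] by (auto simp: K_def)

lemma cfg_Suc: "cfg (Suc m) = (if m \<in> Ev then (cfg m)(m mod K := X (m mod K) (Suc (m div K))) else cfg m)"
proof (rule ext)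
  fix j
  have mv: "mvs (m div K) j \<Longrightarrow> j \<le> N" using mvN by blast
  have fr: "\<not> mvs (m div K) j \<Longrightarrow> X j (Suc (m div K)) = X j (m div K)" using frame by blast
  have ev: "m \<in> Ev \<longleftrightarrow> mvs (m div K) (m mod K)" by (simp add: Ev_def)
  show "cfg (Suc m) j = (if m \<in> Ev then (cfg m)(m mod K := X (m mod K) (Suc (m div K))) else cfg m) j"
  proof (cases rule: Suc_code[of m])
    case 1
    show ?thesis unfolding cfg_def 1 ev
      using fr by (cases "j = m mod K"; cases "mvs (m div K) j") (simp_all add: less_Suc_eq)
  next
    case 2
    show ?thesis unfolding cfg_def 2 ev
      using fr mv by (cases "j = m mod K"; cases "mvs (m div K) j") (auto simp: 2)
  qed
qed

lemma inp_Suc: "inp (Suc m) = (if m \<in> Ev then (inp m)(m mod K := Y (m mod K) (Suc (m div K))) else inp m)"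
proof (rule ext)
  fix j
  have mv: "mvs (m div K) j \<Longrightarrow> j \<le> N" using mvN by blast
  have fr: "\<not> mvs (m div K) j \<Longrightarrow> Y j (Suc (m div K)) = Y j (m div K)" using frame by blast
  have ev: "m \<in> Ev \<longleftrightarrow> mvs (m div K) (m mod K)" by (simp add: Ev_def)
  show "inp (Suc m) j = (if m \<in> Ev then (inp m)(m mod K := Y (m mod K) (Suc (m div K))) else inp m) j"
  proof (cases rule: Suc_code[of m])
    case 1
    show ?thesis unfolding inp_def 1 ev
      using fr by (cases "j = m mod K"; cases "mvs (m div K) j") (simp_all add: less_Suc_eq)
  next
    case 2
    show ?thesis unfolding inp_def 2 ev
      using fr mv by (cases "j = m mod K"; cases "mvs (m div K) j") (auto simp: 2)
  qed
qed

lemma const_gap: "a \<le> b \<Longrightarrow> (\<forall>m. a \<le> m \<and> m < b \<longrightarrow> m \<notin> Ev) \<Longrightarrow> cfg b = cfg a \<and> inp b = inp a"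
proof (induction b)
  case 0 then show ?case by simp
next
  case (Suc b)
  show ?case
  proof (cases "a = Suc b")
    case True then show ?thesis by simp
  next
    case False
    then have "a \<le> b" using Suc.prems by simp
    moreover have "b \<notin> Ev" using Suc.prems \<open>a \<le> b\<close> by simp
    ultimately show ?thesis using Suc by (simp add: cfg_Suc inp_Suc)
  qed
qed

definition s' where "s' i = cfg (en i)"
definition e' where "e' i = inp (en i)"
definition pr' where "pr' i = en i mod K"

lemma s'_Suc: "s' (Suc i) = (s' i)(pr' i := X (pr' i) (Suc (en i div K)))
   \<and> e' (Suc i) = (e' i)(pr' i := Y (pr' i) (Suc (en i div K)))"
proof -
  have "Suc (en i) \<le> en (Suc i)" by (simp add: Suc_leI)
  then have "cfg (en (Suc i)) = cfg (Suc (en i)) \<and> inp (en (Suc i)) = inp (Suc (en i))"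
    using en_gap[of i] by (intro const_gap) auto
  then show ?thesis using en_in[of i] unfolding s'_def e'_def pr'_def by (simp add: cfg_Suc inp_Suc)
qed

lemma s'_0: "s' 0 = cfg 0 \<and> e' 0 = inp 0"
  unfolding s'_def e'_def using en_gap0 by (intro const_gap) auto

lemma run': "inf_run A B N s' e' pr'"
proof -
  have c1: "\<forall>p\<in>{0..N}. s' 0 p = init (tmpl A B p)"
    using s'_0 init by (simp add: cfg_def)
  have c2: "\<forall>t. \<forall>p\<in>{0..N}. e' t p \<in> alph (tmpl A B p)"
    using alph by (simp add: e'_def inp_def)
  have c3: "pr' i \<in> {0..N} \<and>
      (\<exists>g. enabled A B N (s' i) (e' i) (pr' i) (s' i (pr' i), e' i (pr' i), g, s' (Suc i) (pr' i))) \<and>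
      (\<forall>p. p \<noteq> pr' i \<longrightarrow> s' (Suc i) p = s' i p \<and> e' (Suc i) p = e' i p)" for i
  proof (intro conjI)
    show kN: "pr' i \<in> {0..N}" unfolding pr'_def K_def by (simp add: less_Suc_eq_le)
    define t where "t = en i div K"
    define k where "k = pr' i"
    have mk: "mvs t k" using en_in[of i] unfolding Ev_def t_def k_def pr'_def by simp
    obtain g where g: "(X k t, Y k t, g, X k (Suc t)) \<in> trans (tmpl A B k)"
        "guard_sat N (\<lambda>i. if mvs t i \<and> i < k then X i (Suc t) else X i t) k g"
      using stepv[OF mk] by blast
    have sk1: "s' i k = X k t" unfolding s'_def cfg_def t_def k_def pr'_def by simp
    have sk2: "e' i k = Y k t" unfolding e'_def inp_def t_def k_def pr'_def by simp
    have sk3: "s' (Suc i) k = X k (Suc t)" using s'_Suc[of i] unfolding t_def k_def by simp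
    have gs: "(\<lambda>j. if mvs t j \<and> j < k then X j (Suc t) else X j t) = s' i"
      unfolding s'_def t_def k_def pr'_def by (rule ext) (simp add: cfg_def)
    have g2: "guard_sat N (s' i) k g" using g(2) unfolding gs .
    have kN': "k \<in> {0..N}" using kN unfolding k_def .
    have "enabled A B N (s' i) (e' i) k (s' i k, e' i k, g, s' (Suc i) k)"
      unfolding enabled_def using g(1) sk1 sk2 sk3 g2 kN' by simp
    then show "\<exists>g. enabled A B N (s' i) (e' i) (pr' i) (s' i (pr' i), e' i (pr' i), g, s' (Suc i) (pr' i))"
      unfolding k_def by blast
    show "\<forall>p. p \<noteq> pr' i \<longrightarrow> s' (Suc i) p = s' i p \<and> e' (Suc i) p = e' i p"
      using s'_Suc[of i] by simp
  qed
  show ?thesis unfolding inf_run_def by (intro conjI c1 c2 allI c3)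
qed

lemma fair': "uncond_fair N pr'"
  unfolding uncond_fair_def
proof
  fix j assume j: "j \<in> {0..N}"
  have ex: "\<exists>i\<ge>i0. pr' i = j" for i0
  proof -
    obtain t where t: "t \<ge> en i0" "mvs t j" using fairs[of j "en i0"] j by auto
    have jK: "j < K" using j by (simp add: K_def)
    obtain i where i: "en i = t * K + j" using en_ex[OF Ev_code[OF t(2)]] by blast
    have "t \<le> t * K" by (simp add: K_def)
    then have "en i0 \<le> en i" using t(1) i by linarith
    then have "i0 \<le> i" using en_le_iff by blast
    moreover have "pr' i = j" unfolding pr'_def i using jK by (simp only: code_mod)
    ultimately show ?thesis by blast
  qed
  show "infinite {i. pr' i = j}"
    by (rule infinite_nat_iff_unbounded_le[THEN iffD2]) (use ex in blast)
qed

definition w where "w t = label (\<lambda>j. X j t) (\<lambda>j. Y j t)"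

definition \<psi>0 where "\<psi>0 m = m div K + (if (mvs (m div K) 0 \<and> 0 < m mod K) \<or> (mvs (m div K) 1 \<and> 1 < m mod K) then 1 else 0)"

lemma lab: "label (cfg m) (inp m) = w (\<psi>0 m)"
proof -
  define t where "t = m div K"
  define k where "k = m mod K"
  have "cfg m 0 = X 0 (\<psi>0 m) \<and> cfg m 1 = X 1 (\<psi>0 m) \<and> inp m 0 = Y 0 (\<psi>0 m) \<and> inp m 1 = Y 1 (\<psi>0 m)"
    using excl[of t] frame[of t 0] frame[of t 1]
    unfolding cfg_def inp_def \<psi>0_def t_def[symmetric] k_def[symmetric] by auto
  then show ?thesis unfolding label_def w_def by simp
qed

lemma \<psi>0_mono: "m \<le> m' \<Longrightarrow> \<psi>0 m \<le> \<psi>0 m'"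
proof -
  assume a: "m \<le> m'"
  have d: "m div K \<le> m' div K" using a by (rule div_le_mono)
  show ?thesis
  proof (cases "m div K < m' div K")
    case True then show ?thesis unfolding \<psi>0_def by auto
  next
    case False
    then have eq: "m div K = m' div K" using d by simp
    have "m mod K \<le> m' mod K"
      using a eq by (metis add_le_cancel_left div_mult_mod_eq)
    then show ?thesis unfolding \<psi>0_def eq by auto
  qed
qed

definition \<psi> where "\<psi> i = (case i of 0 \<Rightarrow> 0 | Suc i' \<Rightarrow> \<psi>0 (Suc (en i')))"

lemma \<psi>_mono: "mono \<psi>"
proof (rule mono_iff_le_Suc[THEN iffD2], intro allI)
  fix i show "\<psi> i \<le> \<psi> (Suc i)"
  proof (cases i)
    case 0 then show ?thesis by (simp add: \<psi>_def)
  next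
    case (Suc i')
    have "en i' < en (Suc i')" by simp
    then show ?thesis using Suc by (simp add: \<psi>_def \<psi>0_mono)
  qed
qed

lemma w'_eq: "label (s' i) (e' i) = w (\<psi> i)"
proof (cases i)
  case 0
  have "\<psi>0 0 = 0" by (simp add: \<psi>0_def)
  then show ?thesis using 0 s'_0 lab[of 0] by (simp add: \<psi>_def)
next
  case (Suc i')
  have "Suc (en i') \<le> en (Suc i')" by (simp add: Suc_leI)
  then have "cfg (en (Suc i')) = cfg (Suc (en i')) \<and> inp (en (Suc i')) = inp (Suc (en i'))"
    using en_gap[of i'] by (intro const_gap) auto
  then show ?thesis using Suc lab[of "Suc (en i')"] unfolding s'_def e'_def by (simp add: \<psi>_def)
qed

lemma \<psi>_event: "mvs v j0 \<Longrightarrow> j0 \<le> 1 \<Longrightarrow> \<exists>i'. \<psi> (Suc i') = Suc v"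
proof -
  assume a: "mvs v j0" "j0 \<le> 1"
  obtain i' where i': "en i' = v * K + j0" using en_ex[OF Ev_code[OF a(1)]] by blast
  have jK: "j0 < K" using a N1 by (simp add: K_def)
  have j01: "j0 = 0 \<or> j0 = 1" using a(2) by auto
  from mod_div_Suc_cases[of "en i'"]
  have "\<psi>0 (Suc (en i')) = Suc v"
  proof
    assume c: "Suc (en i' mod K) < K \<and> Suc (en i') div K = en i' div K \<and> Suc (en i') mod K = Suc (en i' mod K)"
    then show ?thesis using a jK j01 unfolding \<psi>0_def i' by (auto simp: code_div code_mod)
  next
    assume c: "Suc (en i' mod K) = K \<and> Suc (en i') div K = Suc (en i' div K) \<and> Suc (en i') mod K = 0"
    then show ?thesis using a jK j01 unfolding \<psi>0_def i' by (auto simp: code_div code_mod)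
  qed
  then show ?thesis by (auto simp: \<psi>_def)
qed

lemma w_frame: "\<not> mvs v 0 \<Longrightarrow> \<not> mvs v 1 \<Longrightarrow> w (Suc v) = w v"
  using frame[of v 0] frame[of v 1] unfolding w_def label_def by simp

lemma blk: "\<psi> i \<le> u \<Longrightarrow> u < \<psi> (Suc i) \<Longrightarrow> w u = w (\<psi> i)"
proof -
  assume a: "\<psi> i \<le> u" "u < \<psi> (Suc i)"
  have step: "w (Suc v) = w v" if v: "\<psi> i \<le> v" "Suc v < \<psi> (Suc i)" for v
  proof (rule ccontr)
    assume ne: "w (Suc v) \<noteq> w v"
    have contra: False if j0: "mvs v j0" "j0 \<le> 1" for j0
    proof -
    obtain i' where i': "\<psi> (Suc i') = Suc v" using \<psi>_event[OF j0] by blast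
    show False
    proof (cases "i' < i")
      case True
      then have "Suc i' \<le> i" by simp
      then have "\<psi> (Suc i') \<le> \<psi> i" by (rule monoD[OF \<psi>_mono])
      then show False using i' v by linarith
    next
      case False
      then have "Suc i \<le> Suc i'" by simp
      then have "\<psi> (Suc i) \<le> \<psi> (Suc i')" by (rule monoD[OF \<psi>_mono])
      then show False using i' v by linarith
    qed
    qed
    have "mvs v 0 \<or> mvs v 1" using w_frame ne by blast
    then show False using contra[of 0] contra[of 1] by auto
  qed
  have "\<forall>d. \<psi> i + d \<le> u \<longrightarrow> w (\<psi> i + d) = w (\<psi> i)"
  proof
    fix d show "\<psi> i + d \<le> u \<longrightarrow> w (\<psi> i + d) = w (\<psi> i)"
    proof (induction d)
      case 0 then show ?case by simp
    next
      case (Suc d)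
      show ?case
      proof
        assume "\<psi> i + Suc d \<le> u"
        then have "w (Suc (\<psi> i + d)) = w (\<psi> i + d)" using a by (intro step) auto
        then show "w (\<psi> i + Suc d) = w (\<psi> i)" using Suc \<open>\<psi> i + Suc d \<le> u\<close> by simp
      qed
    qed
  qed
  moreover have "\<psi> i + (u - \<psi> i) \<le> u" using a by simp
  ultimately have "w (\<psi> i + (u - \<psi> i)) = w (\<psi> i)" by blast
  then show ?thesis using a(1) by simp
qed

lemma \<psi>_unb: "\<exists>i. u < \<psi> i"
proof -
  define i where "i = Suc u * K"
  have "Suc i div K \<ge> i div K" by (rule div_le_mono) simp
  moreover have "i div K = Suc u" unfolding i_def using K_pos by simp
  moreover have "\<psi>0 (Suc (en i)) \<ge> Suc i div K"
  proof -
    have "Suc i \<le> Suc (en i)" using le_en[of i] by simp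
    then have "Suc i div K \<le> Suc (en i) div K" by (rule div_le_mono)
    then show ?thesis unfolding \<psi>0_def by simp
  qed
  ultimately have "u < \<psi> (Suc i)" by (simp add: \<psi>_def)
  then show ?thesis by blast
qed

lemma stut': "stut w (\<lambda>i. label (s' i) (e' i))"
proof -
  have "\<psi> 0 = 0" by (simp add: \<psi>_def)
  then show ?thesis unfolding stut_def using \<psi>_mono w'_eq blk \<psi>_unb by blast
qed

theorem sim_result: "\<exists>s e pr. inf_run A B N s e pr \<and> uncond_fair N pr \<and>
   stut (\<lambda>t. label (\<lambda>j. X j t) (\<lambda>j. Y j t)) (\<lambda>i. label (s i) (e i))"
  using run' fair' stut' unfolding w_def by blast

end

datatype 'q slot = Hold 'q | Fol nat | Pad nat

definition tr :: "'x \<Rightarrow> 'x \<Rightarrow> 'x \<Rightarrow> 'x" where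
  "tr a b x = (if x = a then b else if x = b then a else x)"

lemma pigeon:
  fixes P :: "'i \<Rightarrow> nat \<Rightarrow> bool"
  assumes fin: "finite I" and inf: "\<forall>t0. \<exists>t\<ge>t0. \<exists>i\<in>I. P i t"
  shows "\<exists>i\<in>I. \<forall>t0. \<exists>t\<ge>t0. P i t"
proof (rule ccontr)
  assume "\<not> ?thesis"
  then have "\<forall>i\<in>I. \<exists>b. \<forall>t\<ge>b. \<not> P i t" by blast
  then obtain b :: "_ \<Rightarrow> nat" where b: "\<forall>i\<in>I. \<forall>t\<ge>b i. \<not> P i t" using bchoice by metis
  obtain t i where ti: "t \<ge> sum b I" "i \<in> I" "P i t" using inf by blast
  have "b i \<le> sum b I" using member_le_sum[of i I b] ti(2) fin by simp
  then show False using b ti by auto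
qed

lemma tmpl_B: "p \<noteq> 0 \<Longrightarrow> tmpl A B p = B" by (simp add: tmpl_def)
lemma tmpl_A: "tmpl A B 0 = A" by (simp add: tmpl_def)

locale orun =
  fixes A B :: "('q,'a) template" and n :: nat
    and s :: "nat \<Rightarrow> nat \<Rightarrow> 'q" and e :: "nat \<Rightarrow> nat \<Rightarrow> 'a" and pr :: "nat \<Rightarrow> nat"
  assumes wf: "wf_pair A B" and run: "inf_run A B n s e pr" and fair: "uncond_fair n pr"
    and n1: "1 \<le> n"
begin

lemma pr_le: "pr t \<le> n" using run unfolding inf_run_def by auto
lemma frame_s: "p \<noteq> pr t \<Longrightarrow> s (Suc t) p = s t p" using run unfolding inf_run_def by blast
lemma frame_e: "p \<noteq> pr t \<Longrightarrow> e (Suc t) p = e t p" using run unfolding inf_run_def by blast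
lemma s0: "p \<le> n \<Longrightarrow> s 0 p = init (tmpl A B p)" using run unfolding inf_run_def by auto
lemma e_alph: "p \<le> n \<Longrightarrow> e t p \<in> alph (tmpl A B p)" using run unfolding inf_run_def by auto

lemma step_ex: "\<exists>g. (s t (pr t), e t (pr t), g, s (Suc t) (pr t)) \<in> trans (tmpl A B (pr t))
   \<and> guard_sat n (s t) (pr t) g"
proof -
  have rs: "\<forall>t. pr t \<in> {0..n} \<and>
          (\<exists>g. enabled A B n (s t) (e t) (pr t) (s t (pr t), e t (pr t), g, s (Suc t) (pr t))) \<and>
          (\<forall>p. p \<noteq> pr t \<longrightarrow> s (Suc t) p = s t p \<and> e (Suc t) p = e t p)"
    using conjunct2[OF conjunct2[OF run[unfolded inf_run_def]]] .
  have "\<exists>g. enabled A B n (s t) (e t) (pr t) (s t (pr t), e t (pr t), g, s (Suc t) (pr t))"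
    using conjunct1[OF conjunct2[OF spec[OF rs, of t]]] .
  then obtain g where "enabled A B n (s t) (e t) (pr t) (s t (pr t), e t (pr t), g, s (Suc t) (pr t))" ..
  then show ?thesis unfolding enabled_def by auto
qed

lemma io: "p \<le> n \<Longrightarrow> \<exists>t\<ge>t0. pr t = p"
proof -
  assume "p \<le> n"
  then have "infinite {t. pr t = p}" using fair unfolding uncond_fair_def by auto
  then have "\<forall>m. \<exists>t\<ge>m. t \<in> {t. pr t = p}" by (rule infinite_nat_iff_unbounded_le[THEN iffD1])
  then show ?thesis by simp
qed

lemma wf_t: "wf_template (tmpl A B p) (states A \<union> states B)"
  using wf unfolding wf_pair_def tmpl_def by auto

lemma finB: "finite (states B)" using wf unfolding wf_pair_def wf_template_def by auto
lemma initB: "init B \<in> states B" using wf unfolding wf_pair_def wf_template_def by auto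

lemma s_states: "p \<le> n \<Longrightarrow> s t p \<in> states (tmpl A B p)"
proof (induction t)
  case 0
  then show ?case using s0 wf_t[of p] unfolding wf_template_def by auto
next
  case (Suc t)
  show ?case
  proof (cases "p = pr t")
    case True
    obtain g where "(s t (pr t), e t (pr t), g, s (Suc t) (pr t)) \<in> trans (tmpl A B (pr t))"
      using step_ex by blast
    then show ?thesis using True wf_t[of p] unfolding wf_template_def by auto
  next
    case False
    then show ?thesis using Suc frame_s by simp
  qed
qed

lemma B_states: "1 \<le> p \<Longrightarrow> p \<le> n \<Longrightarrow> s t p \<in> states B"
  using s_states[of p t] by (simp add: tmpl_def)

lemma stay: "t0 \<le> t1 \<Longrightarrow> (\<forall>u. t0 \<le> u \<and> u < t1 \<longrightarrow> pr u \<noteq> p) \<Longrightarrow> s t1 p = s t0 p"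
proof (induction t1 rule: dec_induct)
  case base then show ?case by simp
next
  case (step m)
  then have "pr m \<noteq> p" by auto
  then show ?case using step frame_s[of p m] by auto
qed

lemma next_move: "p \<le> n \<Longrightarrow> \<exists>t\<ge>t0. pr t = p \<and> s t p = s t0 p \<and> (\<forall>u. t0 \<le> u \<and> u < t \<longrightarrow> pr u \<noteq> p)"
proof -
  assume p: "p \<le> n"
  obtain t' where t': "t' \<ge> t0" "pr t' = p" using io[OF p] by blast
  define t where "t = (LEAST t. t0 \<le> t \<and> pr t = p)"
  have t1: "t0 \<le> t \<and> pr t = p" unfolding t_def by (rule LeastI[of _ t']) (use t' in simp)
  have t2: "\<forall>u. t0 \<le> u \<and> u < t \<longrightarrow> pr u \<noteq> p" unfolding t_def using not_less_Least by blast
  have "s t p = s t0 p" using stay[of t0 t p] t1 t2 by simp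
  then show ?thesis using t1 t2 by blast
qed

definition dep where "dep p q \<longleftrightarrow> (\<forall>t0. \<exists>t\<ge>t0. pr t = p \<and> s t p = q)"

lemma vis_dep: "p \<le> n \<Longrightarrow> \<forall>t0. \<exists>t\<ge>t0. s t p = q \<Longrightarrow> dep p q"
  unfolding dep_def
proof (intro allI)
  fix t0 assume p: "p \<le> n" and v: "\<forall>t0. \<exists>t\<ge>t0. s t p = q"
  obtain t1 where t1: "t1 \<ge> t0" "s t1 p = q" using v by blast
  obtain t where "t \<ge> t1" "pr t = p" "s t p = s t1 p" using next_move[OF p, of t1] by blast
  then show "\<exists>t\<ge>t0. pr t = p \<and> s t p = q" using t1 by (intro exI[of _ t]) auto
qed

definition occ where "occ q t \<longleftrightarrow> (\<exists>p. 1 \<le> p \<and> p \<le> n \<and> s t p = q)"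
definition V where "V = {q. \<exists>t. occ q t}"
definition IO where "IO = {q. \<forall>t0. \<exists>t\<ge>t0. occ q t}"
definition ft where "ft q = (LEAST t. occ q t)"
definition fr where "fr q = (SOME p. 1 \<le> p \<and> p \<le> n \<and> s (ft q) p = q)"
definition lst where "lst q = Max {t. occ q t}"
definition pl where "pl q = (SOME p. 1 \<le> p \<and> p \<le> n \<and> s (lst q) p = q)"
definition cA where "cA \<longleftrightarrow> (\<exists>T. \<forall>t\<ge>T. s t 1 = s T 1)"
definition T1 where "T1 = (SOME T. \<forall>t\<ge>T. s t 1 = s T 1)"
definition q1 where "q1 = s T1 1"
definition conv where "conv q \<longleftrightarrow> q \<notin> IO \<or> (cA \<and> q = q1)"
definition ct where "ct q = (if q \<notin> IO then lst q else T1)"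
definition cp where "cp q = (if q \<notin> IO then pl q else 1)"
definition IO' where "IO' = {q \<in> IO. \<not> conv q}"
definition pq where "pq q = (if dep 1 q then 1 else (SOME p. 1 \<le> p \<and> p \<le> n \<and> dep p q))"
definition Fs where "Fs = pq ` IO'"
definition NN where "NN = 2 * card (states B)"
definition pad where "pad = (NN - 1) - (card V + card Fs)"
definition Sl where "Sl = Hold ` V \<union> Fol ` Fs \<union> Pad ` {..<pad}"
definition toks where "toks = {2..NN}"

lemma occ_V: "occ q t \<Longrightarrow> q \<in> V" unfolding V_def by blast
lemma V_sub: "V \<subseteq> states B" unfolding V_def occ_def using B_states by blast
lemma V_fin: "finite V" using V_sub finB finite_subset by blast
lemma IO_V: "IO \<subseteq> V" unfolding IO_def V_def by blast

lemma ft_occ: "q \<in> V \<Longrightarrow> occ q (ft q)" unfolding V_def ft_def by (blast intro: LeastI)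
lemma ft_le: "occ q t \<Longrightarrow> ft q \<le> t" unfolding ft_def by (rule Least_le)
lemma fr: "q \<in> V \<Longrightarrow> 1 \<le> fr q \<and> fr q \<le> n \<and> s (ft q) (fr q) = q"
proof -
  assume "q \<in> V"
  then have ex: "\<exists>p. 1 \<le> p \<and> p \<le> n \<and> s (ft q) p = q" using ft_occ unfolding occ_def by blast
  show ?thesis unfolding fr_def by (rule someI_ex[OF ex])
qed

lemma fin_occ: "q \<notin> IO \<Longrightarrow> finite {t. occ q t}"
proof -
  assume "q \<notin> IO"
  then obtain t0 where "\<forall>t\<ge>t0. \<not> occ q t" unfolding IO_def by blast
  then have "{t. occ q t} \<subseteq> {..<t0}" using not_le by auto
  then show ?thesis using finite_subset by blast
qed

lemma lst: "q \<in> V \<Longrightarrow> q \<notin> IO \<Longrightarrow> occ q (lst q) \<and> (\<forall>t. occ q t \<longrightarrow> t \<le> lst q)"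
proof -
  assume v: "q \<in> V" and ni: "q \<notin> IO"
  have ne: "{t. occ q t} \<noteq> {}" using v unfolding V_def by blast
  show ?thesis using Max_in[OF fin_occ[OF ni] ne] Max_ge[OF fin_occ[OF ni]] unfolding lst_def by auto
qed

lemma pl: "q \<in> V \<Longrightarrow> q \<notin> IO \<Longrightarrow> 1 \<le> pl q \<and> pl q \<le> n \<and> s (lst q) (pl q) = q"
proof -
  assume "q \<in> V" "q \<notin> IO"
  then have ex: "\<exists>p. 1 \<le> p \<and> p \<le> n \<and> s (lst q) p = q" using lst unfolding occ_def by blast
  show ?thesis unfolding pl_def by (rule someI_ex[OF ex])
qed

lemma T1: "cA \<Longrightarrow> \<forall>t\<ge>T1. s t 1 = q1"
proof -
  assume "cA"
  then have ex: "\<exists>T. \<forall>t\<ge>T. s t 1 = s T 1" unfolding cA_def .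
  show ?thesis unfolding T1_def q1_def by (rule someI_ex[OF ex])
qed

lemma occ1: "occ (s t 1) t" unfolding occ_def using n1 by blast

lemma q1_IO: "cA \<Longrightarrow> q1 \<in> IO"
proof -
  assume c: "cA"
  have "\<exists>t\<ge>t0. occ q1 t" for t0
  proof -
    have "s (max t0 T1) 1 = q1" using T1[OF c] by simp
    then have "occ q1 (max t0 T1)" using occ1[of "max t0 T1"] by simp
    then show ?thesis by (intro exI[of _ "max t0 T1"]) simp
  qed
  then show ?thesis unfolding IO_def by blast
qed

lemma conv_facts: "q \<in> V \<Longrightarrow> conv q \<Longrightarrow> ft q \<le> ct q \<and> s (ct q) (cp q) = q \<and> 1 \<le> cp q \<and> cp q \<le> n"
proof -
  assume v: "q \<in> V" and c: "conv q"
  show ?thesis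
  proof (cases "q \<in> IO")
    case False
    then show ?thesis using lst[OF v False] pl[OF v False] ft_le unfolding ct_def cp_def by auto
  next
    case True
    then have ca: "cA" "q = q1" using c unfolding conv_def by auto
    have "s T1 1 = q" using ca unfolding q1_def by simp
    then have "occ q T1" using occ1[of T1] by simp
    then show ?thesis using True ca n1 ft_le unfolding ct_def cp_def q1_def by auto
  qed
qed

lemma IO_dep: "q \<in> IO \<Longrightarrow> \<exists>p. 1 \<le> p \<and> p \<le> n \<and> dep p q"
proof -
  assume "q \<in> IO"
  have "\<forall>t0. \<exists>t\<ge>t0. \<exists>p\<in>{1..n}. s t p = q"
  proof
    fix t0
    obtain t p where "t \<ge> t0" "1 \<le> p" "p \<le> n" "s t p = q" using \<open>q \<in> IO\<close> unfolding IO_def occ_def by blast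
    then show "\<exists>t\<ge>t0. \<exists>p\<in>{1..n}. s t p = q" by (intro exI[of _ t] conjI bexI[of _ p]) auto
  qed
  then obtain p where "p \<in> {1..n}" "\<forall>t0. \<exists>t\<ge>t0. s t p = q"
    using pigeon[of "{1..n}" "\<lambda>p t. s t p = q"] by auto
  then show ?thesis using vis_dep by auto
qed

lemma pq: "q \<in> IO \<Longrightarrow> 1 \<le> pq q \<and> pq q \<le> n \<and> dep (pq q) q"
proof (cases "dep 1 q")
  case True then show ?thesis unfolding pq_def using n1 by simp
next
  case False
  assume "q \<in> IO"
  then have ex: "\<exists>p. 1 \<le> p \<and> p \<le> n \<and> dep p q" by (rule IO_dep)
  show ?thesis using someI_ex[OF ex] False unfolding pq_def by simp
qed

lemma dep_IO: "1 \<le> p \<Longrightarrow> p \<le> n \<Longrightarrow> dep p q \<Longrightarrow> q \<in> IO"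
  unfolding dep_def IO_def occ_def by blast

lemma Fs_range: "p \<in> Fs \<Longrightarrow> 1 \<le> p \<and> p \<le> n"
  unfolding Fs_def IO'_def using pq by auto

lemma IO'_V: "IO' \<subseteq> V" unfolding IO'_def using IO_V by auto

lemma notcA_two: "\<not> cA \<Longrightarrow> \<exists>q q'. q \<noteq> q' \<and> dep 1 q \<and> dep 1 q'"
proof -
  assume nc: "\<not> cA"
  have "\<forall>t0. \<exists>t\<ge>t0. \<exists>q\<in>states B. s t 1 = q" using B_states[of 1] n1 by auto
  then obtain q where q: "q \<in> states B" "\<forall>t0. \<exists>t\<ge>t0. s t 1 = q"
    using pigeon[OF finB, of "\<lambda>q t. s t 1 = q"] by auto
  have "\<exists>q'. q' \<noteq> q \<and> (\<forall>t0. \<exists>t\<ge>t0. s t 1 = q')"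
  proof (rule ccontr)
    assume "\<not> ?thesis"
    then have "\<forall>q'\<in>states B - {q}. \<exists>b. \<forall>t\<ge>b. s t 1 \<noteq> q'" by blast
    then obtain b :: "_ \<Rightarrow> nat" where b: "\<forall>q'\<in>states B - {q}. \<forall>t\<ge>b q'. s t 1 \<noteq> q'" using bchoice by metis
    define T where "T = sum b (states B - {q})"
    have "\<forall>t\<ge>T. s t 1 = q"
    proof (intro allI impI)
      fix t assume t: "t \<ge> T"
      show "s t 1 = q"
      proof (rule ccontr)
        assume ne: "s t 1 \<noteq> q"
        then have m: "s t 1 \<in> states B - {q}" using B_states[of 1 t] n1 by auto
        have "b (s t 1) \<le> T" unfolding T_def using member_le_sum[OF m, of b] finB by simp
        then have "b (s t 1) \<le> t" using t by linarith
        then show False using b m by blast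
      qed
    qed
    then have "\<forall>t\<ge>T. s t 1 = s T 1" by simp
    then show False using nc unfolding cA_def by blast
  qed
  then obtain q' where "q' \<noteq> q" "\<forall>t0. \<exists>t\<ge>t0. s t 1 = q'" by blast
  then show ?thesis using q vis_dep[of 1] n1 by blast
qed

lemma IO_ne: "IO \<noteq> {}"
proof -
  have "\<forall>t0. \<exists>t\<ge>t0. \<exists>q\<in>states B. s t 1 = q" using B_states[of 1] n1 by auto
  then obtain q where q: "\<forall>t0. \<exists>t\<ge>t0. s t 1 = q"
    using pigeon[OF finB, of "\<lambda>q t. s t 1 = q"] by auto
  have "\<exists>t\<ge>t0. occ q t" for t0
  proof -
    obtain t where "t \<ge> t0" "s t 1 = q" using q by blast
    then show ?thesis using occ1[of t] by blast
  qed
  then have "q \<in> IO" unfolding IO_def by blast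
  then show ?thesis by blast
qed

lemma card_Fs: "card Fs + 1 \<le> card IO"
proof -
  have finIO: "finite IO" using IO_V V_fin finite_subset by blast
  show ?thesis
  proof (cases cA)
    case True
    have "IO' = IO - {q1}" unfolding IO'_def conv_def using True by auto
    then have "card IO' = card IO - 1" using q1_IO[OF True] card_Diff_singleton by simp
    moreover have "card Fs \<le> card IO'" unfolding Fs_def by (rule card_image_le) (use finIO in \<open>simp add: IO'_def\<close>)
    moreover have "card IO > 0" using q1_IO[OF True] finIO card_gt_0_iff by blast
    ultimately show ?thesis by simp
  next
    case False
    then obtain q q' where qq: "q \<noteq> q'" "dep 1 q" "dep 1 q'" using notcA_two by blast
    have io: "q \<in> IO" "q' \<in> IO" using qq dep_IO n1 by auto
    have "IO' = IO" unfolding IO'_def conv_def using False by auto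
    have pq1: "pq q = 1" "pq q' = 1" using qq unfolding pq_def by auto
    have "pq ` IO = pq ` (IO - {q'})"
    proof
      show "pq ` IO \<subseteq> pq ` (IO - {q'})"
      proof
        fix y assume "y \<in> pq ` IO"
        then obtain x where x: "x \<in> IO" "y = pq x" by blast
        show "y \<in> pq ` (IO - {q'})"
        proof (cases "x = q'")
          case True then have "y = pq q" using x pq1 by simp
          then show ?thesis using io qq(1) by blast
        next
          case False then show ?thesis using x by blast
        qed
      qed
    qed auto
    then have "Fs = pq ` (IO - {q'})" unfolding Fs_def \<open>IO' = IO\<close> .
    then have "card Fs \<le> card (IO - {q'})" using finIO by (simp add: card_image_le)
    moreover have "card (IO - {q'}) = card IO - 1" using io card_Diff_singleton by simp
    moreover have "card IO > 0" using io finIO card_gt_0_iff by blast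
    ultimately show ?thesis by simp
  qed
qed

lemma card_VF: "card V + card Fs \<le> NN - 1"
proof -
  have "card IO \<le> card V" using IO_V V_fin by (simp add: card_mono)
  moreover have "card V \<le> card (states B)" using V_sub finB by (simp add: card_mono)
  ultimately show ?thesis using card_Fs unfolding NN_def by linarith
qed

lemma NN2: "2 \<le> NN"
proof -
  have "card (states B) > 0" using initB finB card_gt_0_iff by blast
  then show ?thesis unfolding NN_def by simp
qed

lemma Fs_fin: "finite Fs"
  unfolding Fs_def by (rule finite_imageI) (use IO'_V V_fin finite_subset in blast)

lemma card_Sl: "card Sl = NN - 1"
proof -
  have d1: "(Hold ` V) \<inter> (Fol ` Fs) = {}" by auto
  have d2: "(Hold ` V \<union> Fol ` Fs) \<inter> Pad ` {..<pad} = {}" by auto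
  have c1: "card (Hold ` V) = card V" by (rule card_image) (simp add: inj_on_def)
  have c2: "card (Fol ` Fs :: 'q slot set) = card Fs" by (rule card_image) (simp add: inj_on_def)
  have c3: "card (Pad ` {..<pad} :: 'q slot set) = pad" by (subst card_image) (simp_all add: inj_on_def)
  have f1: "finite (Hold ` V)" using V_fin by simp
  have f2: "finite (Fol ` Fs :: 'q slot set)" using Fs_fin by simp
  have f3: "finite (Hold ` V \<union> Fol ` Fs)" using f1 f2 by simp
  have f4: "finite (Pad ` {..<pad} :: 'q slot set)" by simp
  have u1: "card (Hold ` V \<union> Fol ` Fs) = card (Hold ` V) + card (Fol ` Fs :: 'q slot set)"
    using card_Un_disjoint[OF f1 f2 d1] .
  have u2: "card (Hold ` V \<union> Fol ` Fs \<union> Pad ` {..<pad}) = card (Hold ` V \<union> Fol ` Fs) + card (Pad ` {..<pad} :: 'q slot set)"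
    using card_Un_disjoint[OF f3 f4 d2] .
  have "card Sl = card V + card Fs + pad" unfolding Sl_def using u1 u2 c1 c2 c3 by linarith
  then show ?thesis using card_VF unfolding pad_def by simp
qed

lemma card_toks: "card toks = NN - 1" unfolding toks_def using NN2 by simp

lemma Sl_fin: "finite Sl" unfolding Sl_def using V_fin Fs_fin by simp

lemma bij0: "\<exists>h. bij_betw h toks Sl"
  using finite_same_card_bij[of toks Sl] card_Sl card_toks Sl_fin unfolding toks_def by simp

end

context orun begin

definition pos :: "'q slot \<Rightarrow> nat \<Rightarrow> 'q" where
  "pos \<sigma> t = (case \<sigma> of Hold q \<Rightarrow> (if t \<le> ft q then s t (fr q) else if conv q \<and> ct q \<le> t then s t (cp q) else q)
      | Fol p \<Rightarrow> s t p | Pad i \<Rightarrow> s t 1)"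
definition mov :: "'q slot \<Rightarrow> nat \<Rightarrow> bool" where
  "mov \<sigma> t = (case \<sigma> of Hold q \<Rightarrow> (t < ft q \<and> pr t = fr q) \<or> (conv q \<and> ct q \<le> t \<and> pr t = cp q)
      | Fol p \<Rightarrow> pr t = p | Pad i \<Rightarrow> pr t = 1)"

lemma pos_Hold_late: "q \<in> V \<Longrightarrow> ft q \<le> t \<Longrightarrow> pos (Hold q) t = (if conv q \<and> ct q \<le> t then s t (cp q) else q)"
proof -
  assume v: "q \<in> V" and t: "ft q \<le> t"
  show ?thesis
  proof (cases "t = ft q")
    case True
    have a: "s t (fr q) = q" using fr[OF v] True by simp
    have b: "s t (cp q) = q" if c: "conv q" "ct q \<le> t"
    proof -
      have "ct q = t" using conv_facts[OF v c(1)] c(2) True by linarith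
      then show ?thesis using conv_facts[OF v c(1)] by simp
    qed
    show ?thesis using True a b unfolding pos_def by auto
  next
    case False
    then have "\<not> t \<le> ft q" using t by simp
    then show ?thesis unfolding pos_def by simp
  qed
qed

lemma mov_Hold_late: "ft q \<le> t \<Longrightarrow> mov (Hold q) t = (conv q \<and> ct q \<le> t \<and> pr t = cp q)"
  unfolding mov_def by auto

lemma slot_cases:
  assumes "\<sigma> \<in> Sl"
  obtains (H) q where "\<sigma> = Hold q" "q \<in> V" | (F) p where "\<sigma> = Fol p" "p \<in> Fs" | (P) i where "\<sigma> = Pad i"
  using assms unfolding Sl_def by blast

lemma slot_init: "\<sigma> \<in> Sl \<Longrightarrow> pos \<sigma> 0 = init B"
proof -
  assume "\<sigma> \<in> Sl"
  then show ?thesis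
  proof (cases rule: slot_cases)
    case (H q)
    then show ?thesis using fr[OF H(2)] s0[of "fr q"] unfolding pos_def by (simp add: tmpl_def)
  next
    case (F p)
    then show ?thesis using Fs_range[OF F(2)] s0[of p] unfolding pos_def by (simp add: tmpl_def)
  next
    case (P i)
    then show ?thesis using n1 s0[of 1] unfolding pos_def by (simp add: tmpl_def)
  qed
qed

lemma slot_mov: "\<sigma> \<in> Sl \<Longrightarrow> mov \<sigma> t \<Longrightarrow> 1 \<le> pr t \<and> pos \<sigma> t = s t (pr t)"
proof -
  assume sl: "\<sigma> \<in> Sl" and m: "mov \<sigma> t"
  from sl show ?thesis
  proof (cases rule: slot_cases)
    case (H q)
    note v = H(2)
    show ?thesis
    proof (cases "t < ft q \<and> pr t = fr q")
      case True
      then show ?thesis using fr[OF v] H(1) unfolding pos_def by auto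
    next
      case False
      then have c: "conv q" "ct q \<le> t" "pr t = cp q" using m H(1) unfolding mov_def by auto
      have cf: "ft q \<le> ct q" "s (ct q) (cp q) = q" "1 \<le> cp q" using conv_facts[OF v c(1)] by auto
      have "pos (Hold q) t = s t (cp q)"
        using pos_Hold_late[OF v, of t] c cf by auto
      then show ?thesis using H(1) c cf by simp
    qed
  next
    case (F p)
    then show ?thesis using m Fs_range[OF F(2)] unfolding mov_def pos_def by auto
  next
    case (P i)
    then show ?thesis using m unfolding mov_def pos_def by auto
  qed
qed

lemma slot_step: "\<sigma> \<in> Sl \<Longrightarrow> pos \<sigma> (Suc t) = (if mov \<sigma> t then s (Suc t) (pr t) else pos \<sigma> t)"
proof -
  assume sl: "\<sigma> \<in> Sl"
  from sl show ?thesis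
  proof (cases rule: slot_cases)
    case (H q)
    note v = H(2)
    show ?thesis
    proof (cases "t < ft q")
      case True
      have nc: "\<not> (conv q \<and> ct q \<le> t)" using True conv_facts[OF v] by auto
      have mv: "mov (Hold q) t = (pr t = fr q)" using True nc unfolding mov_def by auto
      have p1: "pos (Hold q) t = s t (fr q)" using True unfolding pos_def by simp
      have p2: "pos (Hold q) (Suc t) = s (Suc t) (fr q)" using True unfolding pos_def by simp
      show ?thesis using H(1) mv p1 p2 frame_s[of "fr q" t] by auto
    next
      case False
      then have ft: "ft q \<le> t" "ft q \<le> Suc t" by auto
      have mv: "mov (Hold q) t = (conv q \<and> ct q \<le> t \<and> pr t = cp q)" using mov_Hold_late[OF ft(1)] .
      have p1: "pos (Hold q) t = (if conv q \<and> ct q \<le> t then s t (cp q) else q)" using pos_Hold_late[OF v ft(1)] .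
      have p2: "pos (Hold q) (Suc t) = (if conv q \<and> ct q \<le> Suc t then s (Suc t) (cp q) else q)" using pos_Hold_late[OF v ft(2)] .
      show ?thesis
      proof (cases "conv q \<and> ct q \<le> t")
        case True
        then show ?thesis using H(1) mv p1 p2 frame_s[of "cp q" t] by auto
      next
        case False
        show ?thesis
        proof (cases "conv q \<and> ct q = Suc t")
          case True
          then have "s (Suc t) (cp q) = q" using conv_facts[OF v] by auto
          then show ?thesis using H(1) mv p1 p2 False True by auto
        next
          case False2: False
          then show ?thesis using H(1) mv p1 p2 False by auto
        qed
      qed
    qed
  next
    case (F p)
    then show ?thesis using frame_s[of p t] unfolding mov_def pos_def by auto
  next
    case (P i)
    then show ?thesis using frame_s[of 1 t] unfolding mov_def pos_def by auto
  qed
qed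

definition sw where "sw t \<longleftrightarrow> pr t \<in> Fs \<and> s t (pr t) \<in> IO'"
definition swf where "swf t = (if sw t then tr (Fol (pr t)) (Hold (s t (pr t))) else id)"
definition b0 where "b0 = (SOME h. bij_betw h toks Sl)"
primrec bt :: "nat \<Rightarrow> nat \<Rightarrow> 'q slot" where
  "bt 0 = b0"
| "bt (Suc t) = swf t \<circ> bt t"
definition bt' where "bt' t = swf t \<circ> bt t"

lemma bt_Suc: "bt (Suc t) = bt' t" unfolding bt'_def by simp

lemma sw_facts: "sw t \<Longrightarrow> Fol (pr t) \<in> Sl \<and> Hold (s t (pr t)) \<in> Sl \<and> s t (pr t) \<in> IO' \<and> 1 \<le> pr t \<and> pr t \<le> n"
  unfolding sw_def Sl_def using IO'_V Fs_range by auto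

lemma swf_in: "\<sigma> \<in> Sl \<Longrightarrow> swf t \<sigma> \<in> Sl"
  unfolding swf_def tr_def using sw_facts[of t] by auto

lemma swf_inv: "swf t (swf t \<sigma>) = \<sigma>"
  unfolding swf_def tr_def by auto

lemma swf_id: "\<not> sw u \<or> (\<sigma> \<noteq> Fol (pr u) \<and> \<sigma> \<noteq> Hold (s u (pr u))) \<Longrightarrow> swf u \<sigma> = \<sigma>"
  unfolding swf_def tr_def by auto

lemma b0: "bij_betw b0 toks Sl" unfolding b0_def using bij0 by (rule someI_ex)

lemma bt_in: "k \<in> toks \<Longrightarrow> bt t k \<in> Sl"
proof (induction t)
  case 0 then show ?case using b0 by (simp add: bij_betw_apply)
next
  case (Suc t) then show ?case using swf_in by simp
qed

lemma bt_surj: "\<sigma> \<in> Sl \<Longrightarrow> \<exists>k\<in>toks. bt t k = \<sigma>"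
proof (induction t arbitrary: \<sigma>)
  case 0
  then have "\<sigma> \<in> b0 ` toks" using b0 unfolding bij_betw_def by simp
  then obtain k where "k \<in> toks" "\<sigma> = b0 k" by blast
  then show ?case by auto
next
  case (Suc t)
  have "swf t \<sigma> \<in> Sl" using swf_in Suc.prems by blast
  then obtain k where "k \<in> toks" "bt t k = swf t \<sigma>" using Suc.IH by blast
  then show ?case using swf_inv[of t \<sigma>] by (intro bexI[of _ k]) auto
qed

lemma bt'_in: "k \<in> toks \<Longrightarrow> bt' t k \<in> Sl" using bt_in[of k "Suc t"] unfolding bt_Suc .
lemma bt'_surj: "\<sigma> \<in> Sl \<Longrightarrow> \<exists>k\<in>toks. bt' t k = \<sigma>" using bt_surj[of \<sigma> "Suc t"] unfolding bt_Suc .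

lemma occ_ft: "1 \<le> p \<Longrightarrow> p \<le> n \<Longrightarrow> ft (s t p) \<le> t"
  using ft_le[of "s t p" t] unfolding occ_def by blast

lemma pos_IO': "q \<in> IO' \<Longrightarrow> ft q \<le> t \<Longrightarrow> pos (Hold q) t = q \<and> \<not> mov (Hold q) t"
proof -
  assume q: "q \<in> IO'" and t: "ft q \<le> t"
  have v: "q \<in> V" and nc: "\<not> conv q" using q IO'_V unfolding IO'_def by auto
  show ?thesis using pos_Hold_late[OF v t] mov_Hold_late[OF t] nc by simp
qed

lemma coloc: "\<sigma> \<in> Sl \<Longrightarrow> pos (swf t \<sigma>) t = pos \<sigma> t"
proof (cases "sw t")
  case False then show ?thesis unfolding swf_def by simp
next
  case True
  have f: "s t (pr t) \<in> IO'" "1 \<le> pr t" "pr t \<le> n" using sw_facts[OF True] by auto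
  have h: "pos (Hold (s t (pr t))) t = s t (pr t)" using pos_IO'[OF f(1) occ_ft[OF f(2,3)]] by simp
  have fo: "pos (Fol (pr t)) t = s t (pr t)" unfolding pos_def by simp
  show ?thesis using True h fo unfolding swf_def tr_def by auto
qed

definition X where "X k t = pos (bt t k) t"
definition mv where "mv k t = mov (bt' t k) t"

lemma X_bt': "k \<in> toks \<Longrightarrow> X k t = pos (bt' t k) t"
  unfolding X_def bt'_def using coloc[OF bt_in] by simp

lemma tok_init: "k \<in> toks \<Longrightarrow> X k 0 = init B"
proof -
  assume k: "k \<in> toks"
  show ?thesis unfolding X_def by (rule slot_init[OF bt_in[OF k]])
qed

lemma tok_step: "k \<in> toks \<Longrightarrow> X k (Suc t) = (if mv k t then s (Suc t) (pr t) else X k t)"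
proof -
  assume k: "k \<in> toks"
  have "X k (Suc t) = pos (bt' t k) (Suc t)" unfolding X_def bt_Suc ..
  also have "\<dots> = (if mov (bt' t k) t then s (Suc t) (pr t) else pos (bt' t k) t)"
    using slot_step[OF bt'_in[OF k]] .
  finally show ?thesis using X_bt'[OF k] unfolding mv_def by simp
qed

lemma tok_mv: "k \<in> toks \<Longrightarrow> mv k t \<Longrightarrow> 1 \<le> pr t \<and> pr t \<le> n \<and> X k t = s t (pr t)"
  using slot_mov[OF bt'_in] X_bt' pr_le unfolding mv_def by auto

lemma bt_stay: "t0 \<le> t1 \<Longrightarrow> bt t0 k = \<sigma> \<Longrightarrow> (\<forall>u. t0 \<le> u \<and> u < t1 \<longrightarrow> swf u \<sigma> = \<sigma>) \<Longrightarrow> bt t1 k = \<sigma>"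
proof (induction t1 rule: dec_induct)
  case base then show ?case by simp
next
  case (step m) then show ?case by simp
qed

lemma fair_hold: "q \<in> IO' \<Longrightarrow> bt t0 k = Hold q \<Longrightarrow> \<exists>t\<ge>t0. mv k t"
proof (rule ccontr)
  assume q: "q \<in> IO'" and b: "bt t0 k = Hold q" and no: "\<not> (\<exists>t\<ge>t0. mv k t)"
  have st: "bt t k = Hold q" if "t0 \<le> t" for t
    using that
  proof (induction t rule: dec_induct)
    case base then show ?case using b .
  next
    case (step m)
    have "swf m (Hold q) = Hold q"
    proof (rule ccontr)
      assume ne: "swf m (Hold q) \<noteq> Hold q"
      then have sm: "sw m" "Hold q = Hold (s m (pr m))" unfolding swf_def tr_def by (auto split: if_splits)
      then have "bt' m k = Fol (pr m)" unfolding bt'_def using step.IH unfolding swf_def tr_def by simp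
      then have "mv k m" unfolding mv_def mov_def by simp
      then show False using no step.hyps by auto
    qed
    then show ?case using step.IH by simp
  qed
  have io: "q \<in> IO" using q unfolding IO'_def by simp
  obtain t where t: "t \<ge> t0" "pr t = pq q" "s t (pq q) = q" using pq[OF io] unfolding dep_def by blast
  have "pq q \<in> Fs" unfolding Fs_def using q by blast
  then have sw: "sw t" using t q unfolding sw_def by simp
  have "bt' t k = Fol (pr t)" unfolding bt'_def using st[OF t(1)] sw t unfolding swf_def tr_def by simp
  then have "mv k t" unfolding mv_def mov_def by simp
  then show False using no t(1) by auto
qed

lemma fair_tok: "k \<in> toks \<Longrightarrow> \<exists>t\<ge>t0. mv k t"
proof -
  assume k: "k \<in> toks"
  have sl: "bt t0 k \<in> Sl" using bt_in[OF k] .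
  then show ?thesis
  proof (cases rule: slot_cases)
    case (P i)
    have st: "bt t k = Pad i" if "t0 \<le> t" for t
      using bt_stay[OF that P] swf_id[of _ "Pad i"] by simp
    obtain t where t: "t \<ge> t0" "pr t = 1" using io[OF n1] by blast
    have "bt' t k = Pad i" unfolding bt'_def using st[OF t(1)] swf_id[of t "Pad i"] by simp
    then show ?thesis using t unfolding mv_def mov_def by auto
  next
    case (H q)
    show ?thesis
    proof (cases "conv q")
      case True
      have ns: "swf u (Hold q) = Hold q" for u
      proof (rule swf_id)
        show "\<not> sw u \<or> (Hold q \<noteq> Fol (pr u) \<and> Hold q \<noteq> Hold (s u (pr u)))"
          using True unfolding sw_def IO'_def by auto
      qed
      have st: "bt t k = Hold q" if "t0 \<le> t" for t
        using bt_stay[OF that H(1)] ns by simp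
      have cf: "ft q \<le> ct q" "1 \<le> cp q" "cp q \<le> n" using conv_facts[OF H(2) True] by auto
      obtain t where t: "t \<ge> max t0 (ct q)" "pr t = cp q" using io[OF cf(3)] by blast
      have "bt' t k = Hold q" unfolding bt'_def using st[of t] t(1) ns by simp
      moreover have "mov (Hold q) t" using mov_Hold_late[of q t] t True cf by auto
      ultimately show ?thesis using t unfolding mv_def by (intro exI[of _ t]) auto
    next
      case False
      then have "q \<in> IO'" using H(2) unfolding IO'_def conv_def by auto
      then show ?thesis using fair_hold H(1) by blast
    qed
  next
    case (F p)
    have pn: "p \<le> n" using Fs_range[OF F(2)] by simp
    obtain t1 where t1: "t1 \<ge> t0" "pr t1 = p" "\<forall>u. t0 \<le> u \<and> u < t1 \<longrightarrow> pr u \<noteq> p"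
      using next_move[OF pn, of t0] by blast
    have ns: "\<forall>u. t0 \<le> u \<and> u < t1 \<longrightarrow> swf u (Fol p) = Fol p"
    proof (intro allI impI)
      fix u assume "t0 \<le> u \<and> u < t1"
      then have "pr u \<noteq> p" using t1(3) by blast
      then show "swf u (Fol p) = Fol p" by (intro swf_id) auto
    qed
    have st: "bt t1 k = Fol p" using bt_stay[OF t1(1) F(1) ns] .
    show ?thesis
    proof (cases "sw t1")
      case True
      have "bt (Suc t1) k = Hold (s t1 p)" unfolding bt_Suc bt'_def using st True t1(2) unfolding swf_def tr_def by simp
      moreover have "s t1 p \<in> IO'" using True t1(2) unfolding sw_def by simp
      ultimately obtain t where "t \<ge> Suc t1" "mv k t" using fair_hold by blast
      then show ?thesis using t1(1) by (intro exI[of _ t]) auto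
    next
      case False
      have "bt' t1 k = Fol p" unfolding bt'_def using st False unfolding swf_def by simp
      then have "mv k t1" using t1(2) unfolding mv_def mov_def by simp
      then show ?thesis using t1(1) by blast
    qed
  qed
qed

lemma hold_tok: "q \<in> V \<Longrightarrow> \<exists>k\<in>toks. X k t = pos (Hold q) t \<and> mv k t = mov (Hold q) t"
proof -
  assume "q \<in> V"
  then have "Hold q \<in> Sl" unfolding Sl_def by blast
  then obtain k where k: "k \<in> toks" "bt' t k = Hold q" using bt'_surj by blast
  have "X k t = pos (Hold q) t" using X_bt'[OF k(1), of t] k(2) by simp
  moreover have "mv k t = mov (Hold q) t" using k(2) unfolding mv_def by simp
  ultimately show ?thesis using k(1) by blast
qed

lemma cov: "1 \<le> p' \<Longrightarrow> p' \<le> n \<Longrightarrow> p' \<noteq> pr t \<Longrightarrow>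
   (\<exists>k\<in>toks. X k t = s t p' \<and> \<not> mv k t) \<or> (pr t \<noteq> 1 \<and> s t 1 = s t p') \<or>
   (pr t = 1 \<and> s t 1 = s t p' \<and> s (Suc t) 1 = s t p' \<and> (\<exists>k\<in>toks. X k t = s t p'))"
proof -
  assume p: "1 \<le> p'" "p' \<le> n" "p' \<noteq> pr t"
  define q where "q = s t p'"
  have oc: "occ q t" unfolding q_def occ_def using p by blast
  have v: "q \<in> V" using occ_V[OF oc] .
  have ft: "ft q \<le> t" using ft_le[OF oc] .
  have hold_ok: "\<exists>k\<in>toks. X k t = q \<and> \<not> mv k t" if "\<not> (conv q \<and> ct q \<le> t)"
  proof -
    obtain k where k: "k \<in> toks" "X k t = pos (Hold q) t" "mv k t = mov (Hold q) t" using hold_tok[OF v] by blast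
    then show ?thesis using pos_Hold_late[OF v ft] mov_Hold_late[OF ft] that by auto
  qed
  show ?thesis
  proof (cases "conv q")
    case False
    then show ?thesis using hold_ok unfolding q_def by auto
  next
    case True
    show ?thesis
    proof (cases "q \<in> IO")
      case False
      have "s (Suc t) p' = q" using frame_s[of p' t] p unfolding q_def by simp
      then have "occ q (Suc t)" unfolding occ_def using p by blast
      then have "Suc t \<le> lst q" using lst[OF v False] by blast
      then have "\<not> ct q \<le> t" unfolding ct_def using False by simp
      then show ?thesis using hold_ok unfolding q_def by auto
    next
      case io: True
      have ca: "cA" "q = q1" using True io unfolding conv_def by auto
      have ctq: "ct q = T1" "cp q = 1" using io unfolding ct_def cp_def by auto
      show ?thesis
      proof (cases "t < T1")
        case True
        then show ?thesis using hold_ok ctq unfolding q_def by auto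
      next
        case False
        then have s1: "s t 1 = q" using T1[OF ca(1)] ca(2) by auto
        show ?thesis
        proof (cases "pr t = 1")
          case False
          then show ?thesis using s1 unfolding q_def by auto
        next
          case pr1: True
          have s2: "s (Suc t) 1 = q" using T1[OF ca(1)] ca(2) False by auto
          obtain k where k: "k \<in> toks" "X k t = pos (Hold q) t" using hold_tok[OF v] by blast
          have "pos (Hold q) t = s t 1" using pos_Hold_late[OF v ft] True ctq False by auto
          then have "X k t = q" using k s1 by simp
          then show ?thesis using pr1 s1 s2 k(1) unfolding q_def by auto
        qed
      qed
    qed
  qed
qed

end

context orun begin

definition X' where "X' j t = (if j = 0 then s t 0 else if j = 1 then s t 1 else if j \<le> NN then X j t else init B)"
definition mvs where "mvs t j = (if j = 0 then pr t = 0 else if j = 1 then pr t = 1 else if j \<le> NN then mv j t else False)"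
definition nm where "nm j t = (LEAST u. t \<le> u \<and> mv j u)"
definition Y' where "Y' j t = (if j \<le> 1 then e t j else if j \<le> NN then e (nm j t) (pr (nm j t)) else e 0 0)"

lemma toks_iff: "j \<in> toks \<longleftrightarrow> 2 \<le> j \<and> j \<le> NN" unfolding toks_def by simp

lemma nm_mv: "j \<in> toks \<Longrightarrow> t \<le> nm j t \<and> mv j (nm j t)"
proof -
  assume j: "j \<in> toks"
  obtain u where "u \<ge> t" "mv j u" using fair_tok[OF j] by blast
  then show ?thesis unfolding nm_def by (intro LeastI[of "\<lambda>u. t \<le> u \<and> mv j u" u]) auto
qed

lemma nm_self: "mv j t \<Longrightarrow> nm j t = t"
  unfolding nm_def by (rule Least_equality) auto

lemma nm_Suc: "\<not> mv j t \<Longrightarrow> nm j (Suc t) = nm j t"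
proof -
  assume a: "\<not> mv j t"
  have "(\<lambda>u. Suc t \<le> u \<and> mv j u) = (\<lambda>u. t \<le> u \<and> mv j u)"
  proof
    fix u show "(Suc t \<le> u \<and> mv j u) = (t \<le> u \<and> mv j u)"
      using a by (cases "u = t") auto
  qed
  then show ?thesis unfolding nm_def by simp
qed

lemma mover_pos: "mvs t i \<Longrightarrow> 1 \<le> i \<Longrightarrow> X' i t = s t (pr t) \<and> X' i (Suc t) = s (Suc t) (pr t)"
proof -
  assume m: "mvs t i" and i: "1 \<le> i"
  show ?thesis
  proof (cases "i = 1")
    case True then show ?thesis using m unfolding mvs_def X'_def by simp
  next
    case False
    then have it: "i \<in> toks" "i \<le> NN" using m i unfolding mvs_def toks_iff by (auto split: if_splits)
    have mvi: "mv i t" using m False i it(2) unfolding mvs_def by (auto split: if_splits)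
    have "X i t = s t (pr t)" using tok_mv[OF it(1) mvi] by simp
    moreover have "X i (Suc t) = s (Suc t) (pr t)" using tok_step[OF it(1)] mvi by simp
    ultimately show ?thesis using False i it(2) unfolding X'_def by simp
  qed
qed

lemma sim_ok: "sim A B NN X' Y' mvs"
proof
  fix t j
  assume nm: "\<not> mvs t j"
  show "X' j (Suc t) = X' j t \<and> Y' j (Suc t) = Y' j t"
  proof (cases "j \<le> 1")
    case True
    then have "j \<noteq> pr t" using nm unfolding mvs_def by (cases "j = 0") auto
    then show ?thesis using True frame_s frame_e unfolding X'_def Y'_def by auto
  next
    case False
    show ?thesis
    proof (cases "j \<le> NN")
      case True
      then have jt: "j \<in> toks" using False toks_iff by simp
      have "\<not> mv j t" using nm False True unfolding mvs_def by simp
      then show ?thesis using tok_step[OF jt] nm_Suc False True unfolding X'_def Y'_def by simp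
    next
      case False2: False
      then show ?thesis using False unfolding X'_def Y'_def by simp
    qed
  qed
next
  fix t j assume "mvs t j"
  then show "j \<le> NN" using NN2 unfolding mvs_def by (auto split: if_splits)
next
  fix j t0 :: nat assume j: "j \<le> NN"
  show "\<exists>t\<ge>t0. mvs t j"
  proof (cases "j \<le> 1")
    case True
    then have "j \<le> n" using n1 by simp
    then obtain t where "t \<ge> t0" "pr t = j" using io by blast
    then show ?thesis using True unfolding mvs_def by (intro exI[of _ t]) auto
  next
    case False
    then have jt: "j \<in> toks" using j toks_iff by simp
    obtain t where "t \<ge> t0" "mv j t" using fair_tok[OF jt] by blast
    then show ?thesis using False j unfolding mvs_def by (intro exI[of _ t]) auto
  qed
next
  fix j assume j: "j \<le> NN"
  show "X' j 0 = init (tmpl A B j)"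
  proof (cases "j \<le> 1")
    case True
    then have "j = 0 \<or> j = 1" by auto
    then show ?thesis using s0[of 0] s0[of 1] n1 unfolding X'_def by auto
  next
    case False
    then have jt: "j \<in> toks" using j toks_iff by simp
    then show ?thesis using tok_init[OF jt] False j unfolding X'_def by (simp add: tmpl_def)
  qed
next
  fix j t assume j: "j \<le> NN"
  show "Y' j t \<in> alph (tmpl A B j)"
  proof (cases "j \<le> 1")
    case True
    then show ?thesis using e_alph[of j t] n1 unfolding Y'_def by simp
  next
    case False
    then have jt: "j \<in> toks" using j toks_iff by simp
    have m: "mv j (nm j t)" using nm_mv[OF jt] by simp
    have p: "1 \<le> pr (nm j t)" "pr (nm j t) \<le> n" using tok_mv[OF jt m] by auto
    have "e (nm j t) (pr (nm j t)) \<in> alph (tmpl A B (pr (nm j t)))" using e_alph[OF p(2)] .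
    then show ?thesis using False j p(1) unfolding Y'_def by (simp add: tmpl_def)
  qed
next
  fix t assume "mvs t 0"
  then show "\<not> mvs t 1" unfolding mvs_def by simp
next
  show "1 \<le> NN" using NN2 by simp
next
  fix t j assume mj: "mvs t j"
  define cf where "cf = (\<lambda>i. if mvs t i \<and> i < j then X' i (Suc t) else X' i t)"
  obtain g where g: "(s t (pr t), e t (pr t), g, s (Suc t) (pr t)) \<in> trans (tmpl A B (pr t))"
      "guard_sat n (s t) (pr t) g" using step_ex by blast
  obtain p' where p': "p' \<le> n" "p' \<noteq> pr t" "s t p' \<in> g" using g(2) unfolding guard_sat_def by auto
  have jN: "j \<le> NN" using mj NN2 unfolding mvs_def by (auto split: if_splits)
  have cf_nm: "cf i = X' i t" if "\<not> mvs t i" for i using that unfolding cf_def by simp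
  have tr_ok: "(X' j t, Y' j t, g, X' j (Suc t)) \<in> trans (tmpl A B j)"
  proof (cases "j \<le> 1")
    case True
    then have j01: "j = 0 \<or> j = 1" by auto
    then have pj: "pr t = j" using mj unfolding mvs_def by auto
    from j01 show ?thesis using g(1) pj unfolding X'_def Y'_def by (elim disjE) simp_all
  next
    case False
    then have jt: "j \<in> toks" using jN toks_iff by simp
    have mvj: "mv j t" using mj False jN unfolding mvs_def by simp
    have a: "1 \<le> pr t" "X j t = s t (pr t)" using tok_mv[OF jt mvj] by auto
    have b: "X j (Suc t) = s (Suc t) (pr t)" using tok_step[OF jt] mvj by simp
    have c: "Y' j t = e t (pr t)" using nm_self[OF mvj] False jN unfolding Y'_def by simp
    have "tmpl A B j = tmpl A B (pr t)" using False a(1) by (simp add: tmpl_def)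
    then show ?thesis using g(1) a b c False jN unfolding X'_def by simp
  qed
  have gs: "guard_sat NN cf j g"
  proof (cases "p' = 0")
    case True
    have "pr t \<noteq> 0" using p' True by simp
    then have "\<not> mvs t 0" unfolding mvs_def by simp
    moreover have "j \<noteq> 0" using mj \<open>pr t \<noteq> 0\<close> unfolding mvs_def by (auto split: if_splits)
    ultimately show ?thesis unfolding guard_sat_def using cf_nm[of 0] p' True unfolding X'_def
      by (intro bexI[of _ 0]) auto
  next
    case False
    then have p1: "1 \<le> p'" by simp
    from cov[OF p1 p'(1) p'(2)] show ?thesis
    proof (elim disjE conjE bexE)
      fix k assume k: "k \<in> toks" "X k t = s t p'" "\<not> mv k t"
      have kk: "2 \<le> k" "k \<le> NN" using k(1) toks_iff by auto
      have nmk: "\<not> mvs t k" using k(3) kk unfolding mvs_def by simp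
      then have "k \<noteq> j" using mj by auto
      moreover have "cf k = s t p'" using cf_nm[OF nmk] k(2) kk unfolding X'_def by simp
      ultimately show ?thesis unfolding guard_sat_def using kk p' by (intro bexI[of _ k]) auto
    next
      assume a: "pr t \<noteq> 1" "s t 1 = s t p'"
      have nm1: "\<not> mvs t 1" using a unfolding mvs_def by simp
      then have "j \<noteq> 1" using mj by auto
      moreover have "cf 1 = s t p'" using cf_nm[OF nm1] a unfolding X'_def by simp
      ultimately show ?thesis unfolding guard_sat_def using p' NN2 by (intro bexI[of _ 1]) auto
    next
      fix k assume a: "pr t = 1" "s t 1 = s t p'" "s (Suc t) 1 = s t p'" "k \<in> toks" "X k t = s t p'"
      have kk: "2 \<le> k" "k \<le> NN" using a(4) toks_iff by auto
      show ?thesis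
      proof (cases "j = 1")
        case True
        have "cf k = X' k t" unfolding cf_def using True kk by simp
        then have "cf k = s t p'" using a(5) kk unfolding X'_def by simp
        then show ?thesis unfolding guard_sat_def using kk p' True by (intro bexI[of _ k]) auto
      next
        case False
        have m1: "mvs t 1" using a(1) unfolding mvs_def by simp
        have "X' 1 t = s t p'" "X' 1 (Suc t) = s t p'" using a(2,3) unfolding X'_def by auto
        then have "cf 1 = s t p'" unfolding cf_def by simp
        then show ?thesis unfolding guard_sat_def using p' NN2 False by (intro bexI[of _ 1]) auto
      qed
    qed
  qed
  show "\<exists>g. (X' j t, Y' j t, g, X' j (Suc t)) \<in> trans (tmpl A B j) \<and>
        guard_sat NN (\<lambda>i. if mvs t i \<and> i < j then X' i (Suc t) else X' i t) j g"
    using tr_ok gs unfolding cf_def by blast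
qed

lemma label_eq: "label (\<lambda>j. X' j t) (\<lambda>j. Y' j t) = label (s t) (e t)"
  unfolding label_def X'_def Y'_def by simp

end

theorem mainTheorem7:
  fixes A B :: "('q, 'a) template" and h :: "('q, 'a) ap ltlx" and n :: nat
  assumes "wf_pair A B"
    and "n > 2 * card (states B)"
    and "E_uncond A B n h"
  shows "E_uncond A B (2 * card (states B)) h"
proof -
  obtain s e pr where r: "inf_run A B n s e pr" "uncond_fair n pr" "ltlx_sem (\<lambda>t. label (s t) (e t)) h"
    using assms(3) unfolding E_uncond_def by blast
  have n1: "1 \<le> n" using assms(2) by simp
  interpret R: orun A B n s e pr using assms(1) r(1,2) n1 by (rule orun.intro)
  have "sim A B R.NN R.X' R.Y' R.mvs" by (rule R.sim_ok)
  then obtain s' e' pr' where r': "inf_run A B R.NN s' e' pr'" "uncond_fair R.NN pr'"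
    "stut (\<lambda>t. label (\<lambda>j. R.X' j t) (\<lambda>j. R.Y' j t)) (\<lambda>i. label (s' i) (e' i))"
    using sim.sim_result by blast
  have "stut (\<lambda>t. label (s t) (e t)) (\<lambda>i. label (s' i) (e' i))"
    using r'(3) R.label_eq by simp
  then have "ltlx_sem (\<lambda>i. label (s' i) (e' i)) h" using stut_sem r(3) by blast
  then show ?thesis unfolding E_uncond_def R.NN_def using r'(1,2) unfolding R.NN_def by blast
qed

end
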